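(* Let $I=(E,\mathcal C,c,p,\beta)$ be a BC instance, let $0<\varepsilon<\tfrac12$, and let $R\subseteq E$ be a strict representative set (SRS) of $I$ and $\varepsilon$. Then $R$ is a representative set of $I$ and $\varepsilon$.
   Context: Let $E$ be a finite ground set. A constraint on $E$ is either (i) a matching constraint: an undirected graph $\mathcal C=(V,E)$, whose feasible sets $\mathcal M=\mathcal M(\mathcal C)$ are the matchings of $\mathcal C$; or (ii) a matroid intersection constraint: a pair $\mathcal C=(\mathcal I_1,\mathcal I_2)$ where $(E,\mathcal I_1),(E,\mathcal I_2)$ are matroids given by independence oracles, with $\mathcal M(\mathcal C)=\mathcal I_1\cap\mathcal I_2$. A BC instance is $I=(E,\mathcal C,c,p,\beta)$ with $c,p:E\to\mathbb R_{\ge0}$, $\beta\in\mathbb R_{\ge 0}$; it is a BM instance if $\mathcal C$ is a matching constraint and a BI instance otherwise. A solution is $S\in\mathcal M(\mathcal C)$ with $c(S)\le\beta$ (with $f(S)=\sum_{e\in S}f(e)$); $\mathrm{OPT}(I)$ is the maximum of $p(S)$ over solutions. For $0<\varepsilon<\tfrac12$: $H=\{e\in E: p(e)>\varepsilon\,\mathrm{OPT}(I)\}$; $q(\varepsilon)=\lceil\varepsilon^{-1/\varepsilon}\rceil$; $\mathcal M_{\le q(\varepsilon)}=\{A\in\mathcal M(\mathcal C):|A|\le q(\varepsilon)\}$. A set $R\subseteq E$ is a representative set of $I$ and $\varepsilon$ if there is a solution $S$ of $I$ with $S\cap H\subseteq R$ and $p(S)\ge(1-4\varepsilon)\mathrm{OPT}(I)$.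 For $S\in\mathcal M_{\le q(\varepsilon)}$, a set $Z_S\subseteq E$ is a replacement of $S$ (for $I,\varepsilon$) if: (1) $(S\setminus H)\cup Z_S\in\mathcal M_{\le q(\varepsilon)}$; (2) $c(Z_S)\le c(S\cap H)$; (3) $p((S\setminus H)\cup Z_S)\ge(1-\varepsilon)p(S)$; (4) $|Z_S|\le|S\cap H|$. A set $R\subseteq E$ is a strict representative set (SRS) of $I$ and $\varepsilon$ if every $S\in\mathcal M_{\le q(\varepsilon)}$ has a replacement $Z_S\subseteq R$. *)

theory Defs
  imports Complex_Main
begin

definition matroid :: "'e set \<Rightarrow> 'e set set \<Rightarrow> bool" where
  "matroid E \<I> \<longleftrightarrow> finite E \<and> (\<forall>A\<in>\<I>. A \<subseteq> E) \<and> {} \<in> \<I> \<and>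
     (\<forall>A B. B \<in> \<I> \<longrightarrow> A \<subseteq> B \<longrightarrow> A \<in> \<I>) \<and>
     (\<forall>A B. A \<in> \<I> \<longrightarrow> B \<in> \<I> \<longrightarrow> card A < card B \<longrightarrow> (\<exists>x\<in>B - A. insert x A \<in> \<I>))"

text \<open>A constraint: either an undirected graph (V, E) given by the vertex set and the
  endpoint map of the edges (the ground set E is the edge set), or a pair of matroids.\<close>
datatype ('e, 'v) constraint =
    Matching "'v set" "'e \<Rightarrow> 'v set"
  | MatroidInt "'e set set" "'e set set"

fun valid_constraint :: "'e set \<Rightarrow> ('e, 'v) constraint \<Rightarrow> bool" where
  "valid_constraint E (Matching V ends) \<longleftrightarrow>
     finite E \<and> (\<forall>e\<in>E. ends e \<subseteq> V \<and> card (ends e) = 2) \<and> inj_on ends E"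
| "valid_constraint E (MatroidInt I1 I2) \<longleftrightarrow> matroid E I1 \<and> matroid E I2"

fun feasible :: "'e set \<Rightarrow> ('e, 'v) constraint \<Rightarrow> 'e set set" where
  "feasible E (Matching V ends) =
     {M. M \<subseteq> E \<and> (\<forall>e\<in>M. \<forall>f\<in>M. e \<noteq> f \<longrightarrow> ends e \<inter> ends f = {})}"
| "feasible E (MatroidInt I1 I2) = I1 \<inter> I2"

definition BC_instance ::
  "'e set \<Rightarrow> ('e, 'v) constraint \<Rightarrow> ('e \<Rightarrow> real) \<Rightarrow> ('e \<Rightarrow> real) \<Rightarrow> real \<Rightarrow> bool" where
  "BC_instance E C c p \<beta> \<longleftrightarrow> valid_constraint E C \<and>
     (\<forall>e\<in>E. c e \<ge> 0 \<and> p e \<ge> 0) \<and> \<beta> \<ge> 0"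

definition is_solution ::
  "'e set \<Rightarrow> ('e, 'v) constraint \<Rightarrow> ('e \<Rightarrow> real) \<Rightarrow> real \<Rightarrow> 'e set \<Rightarrow> bool" where
  "is_solution E C c \<beta> S \<longleftrightarrow> S \<in> feasible E C \<and> sum c S \<le> \<beta>"

definition OPT ::
  "'e set \<Rightarrow> ('e, 'v) constraint \<Rightarrow> ('e \<Rightarrow> real) \<Rightarrow> ('e \<Rightarrow> real) \<Rightarrow> real \<Rightarrow> real" where
  "OPT E C c p \<beta> = Max {sum p S | S. is_solution E C c \<beta> S}"

definition heavy ::
  "'e set \<Rightarrow> ('e, 'v) constraint \<Rightarrow> ('e \<Rightarrow> real) \<Rightarrow> ('e \<Rightarrow> real) \<Rightarrow> real \<Rightarrow> real \<Rightarrow> 'e set" where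
  "heavy E C c p \<beta> \<epsilon> = {e \<in> E. p e > \<epsilon> * OPT E C c p \<beta>}"

definition qeps :: "real \<Rightarrow> nat" where
  "qeps \<epsilon> = nat \<lceil>\<epsilon> powr (- 1 / \<epsilon>)\<rceil>"

definition M_le_q :: "'e set \<Rightarrow> ('e, 'v) constraint \<Rightarrow> real \<Rightarrow> 'e set set" where
  "M_le_q E C \<epsilon> = {A \<in> feasible E C. card A \<le> qeps \<epsilon>}"

definition representative_set ::
  "'e set \<Rightarrow> ('e, 'v) constraint \<Rightarrow> ('e \<Rightarrow> real) \<Rightarrow> ('e \<Rightarrow> real) \<Rightarrow> real \<Rightarrow> real \<Rightarrow> 'e set \<Rightarrow> bool" where
  "representative_set E C c p \<beta> \<epsilon> R \<longleftrightarrow> R \<subseteq> E \<and>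
     (\<exists>S. is_solution E C c \<beta> S \<and> S \<inter> heavy E C c p \<beta> \<epsilon> \<subseteq> R \<and>
          sum p S \<ge> (1 - 4 * \<epsilon>) * OPT E C c p \<beta>)"

definition replacement ::
  "'e set \<Rightarrow> ('e, 'v) constraint \<Rightarrow> ('e \<Rightarrow> real) \<Rightarrow> ('e \<Rightarrow> real) \<Rightarrow> real \<Rightarrow> real \<Rightarrow> 'e set \<Rightarrow> 'e set \<Rightarrow> bool" where
  "replacement E C c p \<beta> \<epsilon> S Z \<longleftrightarrow>
     (let H = heavy E C c p \<beta> \<epsilon> in
       Z \<subseteq> E \<and>
       (S - H) \<union> Z \<in> M_le_q E C \<epsilon> \<and>
       sum c Z \<le> sum c (S \<inter> H) \<and>
       sum p ((S - H) \<union> Z) \<ge> (1 - \<epsilon>) * sum p S \<and>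
       card Z \<le> card (S \<inter> H))"

definition strict_representative_set ::
  "'e set \<Rightarrow> ('e, 'v) constraint \<Rightarrow> ('e \<Rightarrow> real) \<Rightarrow> ('e \<Rightarrow> real) \<Rightarrow> real \<Rightarrow> real \<Rightarrow> 'e set \<Rightarrow> bool" where
  "strict_representative_set E C c p \<beta> \<epsilon> R \<longleftrightarrow> R \<subseteq> E \<and>
     (\<forall>S \<in> M_le_q E C \<epsilon>. \<exists>Z. Z \<subseteq> R \<and> replacement E C c p \<beta> \<epsilon> S Z)"

end

theory Submission
  imports Defs
begin

lemma matroid_her: "matroid E I \<Longrightarrow> B \<in> I \<Longrightarrow> A \<subseteq> B \<Longrightarrow> A \<in> I"
  unfolding matroid_def by blast
lemma matroid_sub: "matroid E I \<Longrightarrow> A \<in> I \<Longrightarrow> A \<subseteq> E"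
  unfolding matroid_def by blast
lemma matroid_empty: "matroid E I \<Longrightarrow> {} \<in> I"
  unfolding matroid_def by blast
lemma matroid_fin: "matroid E I \<Longrightarrow> finite E"
  unfolding matroid_def by blast
lemma matroid_aug_ax: "matroid E I \<Longrightarrow> A \<in> I \<Longrightarrow> B \<in> I \<Longrightarrow> card A < card B \<Longrightarrow> \<exists>x\<in>B - A. insert x A \<in> I"
  unfolding matroid_def by blast
lemma matroid_finI: "matroid E I \<Longrightarrow> A \<in> I \<Longrightarrow> finite A"
  using matroid_fin matroid_sub finite_subset by metis

lemma feasible_sub:
  assumes "valid_constraint E C" "A \<in> feasible E C" "B \<subseteq> A"
  shows "B \<in> feasible E C"
  using assms by (cases C; simp; blast intro: matroid_her)

lemma feasible_E:
  assumes "valid_constraint E C" "A \<in> feasible E C"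
  shows "A \<subseteq> E"
  using assms by (cases C) (auto dest: matroid_sub)

lemma feasible_empty:
  assumes "valid_constraint E C"
  shows "{} \<in> feasible E C"
  using assms by (cases C) (auto intro: matroid_empty)

lemma finite_E:
  assumes "valid_constraint E C" shows "finite E"
  using assms by (cases C) (auto intro: matroid_fin)
lemma matroid_aug:
  assumes m: "matroid E I" and W: "W \<in> I" and A: "A \<in> I"
  shows "\<exists>X. W \<subseteq> X \<and> X \<subseteq> W \<union> A \<and> X \<in> I \<and> card A \<le> card X"
proof -
  have fin: "\<And>X. X \<in> I \<Longrightarrow> finite X" using m by (rule matroid_finI)
  have "\<forall>X. X \<in> I \<longrightarrow> W \<subseteq> X \<longrightarrow> X \<subseteq> W \<union> A \<longrightarrow> card A - card X = n \<longrightarrow>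
        (\<exists>Y. W \<subseteq> Y \<and> Y \<subseteq> W \<union> A \<and> Y \<in> I \<and> card A \<le> card Y)" for n
  proof (induction n)
    case 0
    then show ?case by auto
  next
    case (Suc n)
    show ?case
    proof (intro allI impI)
      fix X assume X: "X \<in> I" "W \<subseteq> X" "X \<subseteq> W \<union> A" "card A - card X = Suc n"
      then have "card X < card A" by simp
      then obtain x where x: "x \<in> A - X" "insert x X \<in> I"
        using matroid_aug_ax[OF m X(1) A] by blast
      have "card (insert x X) = Suc (card X)" using fin[OF X(1)] x by simp
      then have "card A - card (insert x X) = n" using X(4) by simp
      moreover have "W \<subseteq> insert x X" "insert x X \<subseteq> W \<union> A" using X x by auto
      ultimately show "\<exists>Y. W \<subseteq> Y \<and> Y \<subseteq> W \<union> A \<and> Y \<in> I \<and> card A \<le> card Y"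
        using Suc.IH x(2) by blast
    qed
  qed
  then show ?thesis using W by blast
qed

lemma matroid_exch:
  assumes m: "matroid E I" and W: "B \<union> Z \<in> I" and A: "B \<union> T \<in> I" and d: "B \<inter> T = {}"
  shows "\<exists>T1. T1 \<subseteq> T \<and> T1 \<inter> (B \<union> Z) = {} \<and> B \<union> Z \<union> T1 \<in> I \<and> card (T - T1) \<le> card Z"
proof -
  have fin: "\<And>X. X \<in> I \<Longrightarrow> finite X" using m by (rule matroid_finI)
  obtain X where X: "B \<union> Z \<subseteq> X" "X \<subseteq> (B \<union> Z) \<union> (B \<union> T)" "X \<in> I" "card (B \<union> T) \<le> card X"
    using matroid_aug[OF m W A] by blast
  define T1 where "T1 = X - (B \<union> Z)"
  have XT: "X = B \<union> Z \<union> T1" using X(1) T1_def by auto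
  have T1T: "T1 \<subseteq> T" using X(2) T1_def by auto
  have fX: "finite X" using fin X(3) .
  have fT: "finite T" using fin[OF A] by simp
  have fBZ: "finite (B \<union> Z)" using fin[OF W] .
  have fB: "finite B" "finite Z" using fBZ by auto
  have fT1: "finite T1" using fX T1_def by simp
  have dT1: "(B \<union> Z) \<inter> T1 = {}" using T1_def by blast
  have c1: "card X = card (B \<union> Z) + card T1"
    using card_Un_disjoint[OF fBZ fT1 dT1] XT by simp
  have c2: "card (B \<union> T) = card B + card T" using d fB fT by (simp add: card_Un_disjoint)
  have c3: "card (B \<union> Z) \<le> card B + card Z" by (rule card_Un_le)
  have c4: "card (T - T1) = card T - card T1" using T1T fT by (simp add: card_Diff_subset finite_subset)
  have "card (T - T1) \<le> card Z" using c1 c2 c3 c4 X(4) by linarith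
  moreover have "T1 \<inter> (B \<union> Z) = {}" using T1_def by auto
  ultimately show ?thesis using T1T X(3) XT by blast
qed

lemma exch:
  assumes v: "valid_constraint E C" and W: "B \<union> Z \<in> feasible E C"
    and A: "B \<union> T \<in> feasible E C" and d: "B \<inter> T = {}"
  shows "\<exists>T'. T' \<subseteq> T \<and> T' \<inter> (B \<union> Z) = {} \<and> B \<union> Z \<union> T' \<in> feasible E C
      \<and> card (T - T') \<le> 2 * card Z"
proof (cases C)
  case (MatroidInt I1 I2)
  have m1: "matroid E I1" and m2: "matroid E I2" using v MatroidInt by simp_all
  have F: "B \<union> Z \<in> I1 \<inter> I2" "B \<union> T \<in> I1 \<inter> I2" using W A MatroidInt by simp_all
  obtain T1 where T1: "T1 \<subseteq> T" "T1 \<inter> (B \<union> Z) = {}" "B \<union> Z \<union> T1 \<in> I1" "card (T - T1) \<le> card Z"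
    using matroid_exch[OF m1 _ _ d, of Z] F by blast
  obtain T2 where T2: "T2 \<subseteq> T" "T2 \<inter> (B \<union> Z) = {}" "B \<union> Z \<union> T2 \<in> I2" "card (T - T2) \<le> card Z"
    using matroid_exch[OF m2 _ _ d, of Z] F by blast
  have h1: "B \<union> Z \<union> (T1 \<inter> T2) \<in> I1"
    by (rule matroid_her[OF m1 T1(3)]) blast
  have h2: "B \<union> Z \<union> (T1 \<inter> T2) \<in> I2"
    by (rule matroid_her[OF m2 T2(3)]) blast
  have eq: "T - (T1 \<inter> T2) = (T - T1) \<union> (T - T2)" by blast
  have "card (T - (T1 \<inter> T2)) \<le> card (T - T1) + card (T - T2)"
    unfolding eq by (rule card_Un_le)
  then have cc: "card (T - (T1 \<inter> T2)) \<le> 2 * card Z" using T1(4) T2(4) by linarith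
  have s1: "T1 \<inter> T2 \<subseteq> T" using T1(1) by blast
  have s2: "(T1 \<inter> T2) \<inter> (B \<union> Z) = {}" using T1(2) by blast
  have s3: "B \<union> Z \<union> (T1 \<inter> T2) \<in> feasible E C" using h1 h2 MatroidInt by simp
  show ?thesis using s1 s2 s3 cc by blast
next
  case (Matching V ends)
  have fE: "finite E" using v Matching by simp
  have ends2: "\<And>e. e \<in> E \<Longrightarrow> card (ends e) = 2" using v Matching by simp
  have WE: "B \<union> Z \<subseteq> E" and AE: "B \<union> T \<subseteq> E" using W A Matching by auto
  have Tm: "\<And>e f. e \<in> B \<union> T \<Longrightarrow> f \<in> B \<union> T \<Longrightarrow> e \<noteq> f \<Longrightarrow> ends e \<inter> ends f = {}"
    using A Matching by auto
  have Wm: "\<And>e f. e \<in> B \<union> Z \<Longrightarrow> f \<in> B \<union> Z \<Longrightarrow> e \<noteq> f \<Longrightarrow> ends e \<inter> ends f = {}"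
    using W Matching by auto
  define T' where "T' = {e \<in> T. \<forall>z\<in>Z. ends e \<inter> ends z = {}}"
  have ne: "ends e \<noteq> {}" if "e \<in> E" for e
  proof
    assume "ends e = {}"
    then have "card (ends e) = 0" by simp
    then show False using ends2[OF that] by simp
  qed
  have T'Z: "T' \<inter> Z = {}"
  proof (rule ccontr)
    assume "T' \<inter> Z \<noteq> {}"
    then obtain e where "e \<in> T'" "e \<in> Z" by auto
    then have "ends e = {}" using T'_def by auto
    moreover have "e \<in> E" using \<open>e \<in> Z\<close> WE by auto
    ultimately show False using ne by auto
  qed
  have disj: "T' \<inter> (B \<union> Z) = {}" using T'Z d T'_def by auto
  have feas: "B \<union> Z \<union> T' \<in> feasible E C"
  proof -
    have "B \<union> Z \<union> T' \<subseteq> E" using WE AE T'_def by auto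
    moreover have "\<forall>e\<in>B \<union> Z \<union> T'. \<forall>f\<in>B \<union> Z \<union> T'. e \<noteq> f \<longrightarrow> ends e \<inter> ends f = {}"
    proof (intro ballI impI)
      fix e f assume e: "e \<in> B \<union> Z \<union> T'" and f: "f \<in> B \<union> Z \<union> T'" and ef: "e \<noteq> f"
      show "ends e \<inter> ends f = {}"
      proof (cases "e \<in> T'")
        case True
        show ?thesis
        proof (cases "f \<in> Z")
          case True then show ?thesis using \<open>e \<in> T'\<close> T'_def by auto
        next
          case False
          then have "f \<in> B \<union> T" using f T'_def by auto
          moreover have "e \<in> B \<union> T" using \<open>e \<in> T'\<close> T'_def by auto
          ultimately show ?thesis using Tm ef by auto
        qed
      next
        case False
        then have e': "e \<in> B \<union> Z" using e by auto
        show ?thesis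
        proof (cases "f \<in> T'")
          case True
          show ?thesis
          proof (cases "e \<in> Z")
            case True then show ?thesis using \<open>f \<in> T'\<close> T'_def by auto
          next
            case False
            then have "e \<in> B \<union> T" using e' by auto
            moreover have "f \<in> B \<union> T" using \<open>f \<in> T'\<close> T'_def by auto
            ultimately show ?thesis using Tm ef by auto
          qed
        next
          case False
          then have "f \<in> B \<union> Z" using f by auto
          then show ?thesis using Wm e' ef by auto
        qed
      qed
    qed
    ultimately show ?thesis using Matching by auto
  qed
  define g where "g e = (SOME zv. fst zv \<in> Z \<and> snd zv \<in> ends e \<inter> ends (fst zv))" for e
  have g: "fst (g e) \<in> Z \<and> snd (g e) \<in> ends e \<inter> ends (fst (g e))" if "e \<in> T - T'" for e
  proof -
    from that obtain z where "z \<in> Z" "ends e \<inter> ends z \<noteq> {}" using T'_def by auto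
    then obtain v where "v \<in> ends e \<inter> ends z" by auto
    then have "\<exists>zv. fst zv \<in> Z \<and> snd zv \<in> ends e \<inter> ends (fst zv)" using \<open>z \<in> Z\<close>
      by (rule_tac x="(z,v)" in exI) auto
    then show ?thesis unfolding g_def by (rule someI_ex)
  qed
  have inj: "inj_on g (T - T')"
  proof (rule inj_onI)
    fix e f assume e: "e \<in> T - T'" and f: "f \<in> T - T'" and eq: "g e = g f"
    have "snd (g e) \<in> ends e \<inter> ends f" using g[OF e] g[OF f] eq by auto
    then show "e = f" using Tm e f by blast
  qed
  have img: "g ` (T - T') \<subseteq> Sigma Z ends"
  proof
    fix y assume "y \<in> g ` (T - T')"
    then obtain e where e: "e \<in> T - T'" "y = g e" by blast
    have "fst y \<in> Z" "snd y \<in> ends (fst y)" using g[OF e(1)] e(2) by auto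
    then have "(fst y, snd y) \<in> Sigma Z ends" by (rule SigmaI)
    then show "y \<in> Sigma Z ends" by simp
  qed
  have fZ: "finite Z" using WE fE finite_subset by auto
  have fends: "\<forall>z\<in>Z. finite (ends z)"
  proof
    fix z assume "z \<in> Z"
    then have "card (ends z) = 2" using WE ends2 by blast
    then show "finite (ends z)" by (metis card.infinite zero_neq_numeral)
  qed
  have "card (Sigma Z ends) = (\<Sum>z\<in>Z. card (ends z))" using fZ fends by (simp add: card_SigmaI)
  also have "\<dots> = (\<Sum>z\<in>Z. 2)" using WE ends2 by (intro sum.cong) auto
  also have "\<dots> = 2 * card Z" by simp
  finally have cs: "card (Sigma Z ends) = 2 * card Z" .
  have fSig: "finite (Sigma Z ends)" using fZ fends by (simp add: finite_SigmaI)
  have "card (T - T') \<le> card (Sigma Z ends)"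
    using card_inj_on_le[OF inj img fSig] .
  then have cc: "card (T - T') \<le> 2 * card Z" using cs by simp
  have sT: "T' \<subseteq> T" unfolding T'_def by blast
  show ?thesis using sT disj feas cc by blast
qed

theorem mainTheorem3:
  fixes E :: "'e set" and C :: "('e, 'v) constraint"
    and c p :: "'e \<Rightarrow> real" and \<beta> \<epsilon> :: real and R :: "'e set"
  assumes "BC_instance E C c p \<beta>"
    and "0 < \<epsilon>" and "\<epsilon> < 1 / 2"
    and "strict_representative_set E C c p \<beta> \<epsilon> R"
  shows "representative_set E C c p \<beta> \<epsilon> R"
proof -
  have v: "valid_constraint E C" and nn: "\<And>e. e \<in> E \<Longrightarrow> c e \<ge> 0 \<and> p e \<ge> 0"
    using assms(1) unfolding BC_instance_def by auto
  have RE: "R \<subseteq> E" using assms(4) unfolding strict_representative_set_def by auto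
  have fE: "finite E" using finite_E[OF v] .
  let ?Sol = "{sum p S | S. is_solution E C c \<beta> S}"
  have finSol: "finite ?Sol"
  proof -
    have "?Sol \<subseteq> sum p ` Pow E" using feasible_E[OF v] unfolding is_solution_def by auto
    moreover have "finite (sum p ` Pow E)" using fE by simp
    ultimately show ?thesis by (rule finite_subset)
  qed
  have sol0: "is_solution E C c \<beta> {}" using feasible_empty[OF v] assms(1)
    unfolding is_solution_def BC_instance_def by auto
  then have neSol: "?Sol \<noteq> {}" by auto
  define Opt where "Opt = OPT E C c p \<beta>"
  have "Opt \<in> ?Sol" unfolding Opt_def OPT_def using finSol neSol by (rule Max_in)
  then obtain Ss where Ss: "is_solution E C c \<beta> Ss" "sum p Ss = Opt" by auto
  have SsE: "Ss \<subseteq> E" using Ss feasible_E[OF v] unfolding is_solution_def by auto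
  have fSs: "finite Ss" using SsE fE finite_subset by auto
  have SsF: "Ss \<in> feasible E C" and cSs: "sum c Ss \<le> \<beta>" using Ss unfolding is_solution_def by auto
  have "0 \<le> sum p Ss" using SsE nn by (intro sum_nonneg) auto
  then have O0: "Opt \<ge> 0" using Ss(2) by simp
  show ?thesis
  proof (cases "Opt = 0")
    case True
    then show ?thesis using RE sol0 unfolding representative_set_def Opt_def by auto
  next
    case False
    then have Opos: "Opt > 0" using O0 by auto
    define H where "H = heavy E C c p \<beta> \<epsilon>"
    have H_def': "H = {e \<in> E. p e > \<epsilon> * Opt}" unfolding H_def heavy_def Opt_def by simp
    define S where "S = {e \<in> Ss. p e > \<epsilon>^2 * Opt}"
    define T where "T = Ss - S"
    have fS: "finite S" using fSs S_def by auto
    have SSs: "S \<subseteq> Ss" using S_def by auto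
    have pS_le: "sum p S \<le> Opt" using sum_mono2[OF fSs SSs] SsE nn Ss(2) by auto
    have "real (card S) * (\<epsilon>^2 * Opt) \<le> sum p S"
      using sum_bounded_below[of S "\<epsilon>^2 * Opt" p] S_def by auto
    then have "real (card S) * (\<epsilon>^2 * Opt) \<le> Opt" using pS_le by linarith
    then have "(real (card S) * \<epsilon>^2) * Opt \<le> 1 * Opt" by (simp add: mult.assoc)
    then have "real (card S) * \<epsilon>^2 \<le> 1" using Opos by (rule mult_right_le_imp_le)
    then have cS1: "real (card S) \<le> 1 / \<epsilon>^2" using assms(2) by (simp add: field_simps)
    have "1 / \<epsilon>^2 = (1/\<epsilon>) powr 2" using assms(2) by (simp add: powr_numeral power_one_over)
    also have "\<dots> \<le> (1/\<epsilon>) powr (1/\<epsilon>)"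
    proof (rule powr_mono)
      show "2 \<le> 1 / \<epsilon>" using assms(2,3) by (simp add: field_simps)
      show "1 \<le> 1 / \<epsilon>" using assms(2,3) by (simp add: field_simps)
    qed
    also have "\<dots> = \<epsilon> powr (- 1 / \<epsilon>)" using assms(2)
      by (simp add: powr_divide powr_minus_divide)
    finally have "real (card S) \<le> \<epsilon> powr (- 1 / \<epsilon>)" using cS1 by linarith
    then have "real (card S) \<le> of_int \<lceil>\<epsilon> powr (- 1 / \<epsilon>)\<rceil>" by (meson le_of_int_ceiling order_trans)
    then have cSq: "card S \<le> qeps \<epsilon>" unfolding qeps_def by linarith
    have SF: "S \<in> feasible E C" using feasible_sub[OF v SsF SSs] .
    have "S \<in> M_le_q E C \<epsilon>" using SF cSq unfolding M_le_q_def by auto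
    then obtain Z where ZR: "Z \<subseteq> R" and rep: "replacement E C c p \<beta> \<epsilon> S Z"
      using assms(4) unfolding strict_representative_set_def by blast
    have W: "(S - H) \<union> Z \<in> feasible E C" and cZ: "sum c Z \<le> sum c (S \<inter> H)"
      and pW: "sum p ((S - H) \<union> Z) \<ge> (1 - \<epsilon>) * sum p S" and cardZ: "card Z \<le> card (S \<inter> H)"
      using rep unfolding replacement_def M_le_q_def H_def[symmetric] Let_def by auto
    have ZE: "Z \<subseteq> E" using ZR RE by auto
    have fZ: "finite Z" using ZE fE finite_subset by auto
    have "real (card (S \<inter> H)) * (\<epsilon> * Opt) \<le> sum p (S \<inter> H)"
      using sum_bounded_below[of "S \<inter> H" "\<epsilon> * Opt" p] H_def' by auto
    moreover have "sum p (S \<inter> H) \<le> Opt"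
      using sum_mono2[OF fSs, of "S \<inter> H" p] SSs SsE nn Ss(2) by auto
    ultimately have "real (card (S \<inter> H)) * (\<epsilon> * Opt) \<le> Opt" by linarith
    then have "(real (card (S \<inter> H)) * \<epsilon>) * Opt \<le> 1 * Opt" by (simp add: mult.assoc)
    then have "real (card (S \<inter> H)) * \<epsilon> \<le> 1" using Opos by (rule mult_right_le_imp_le)
    then have cZe: "real (card Z) * \<epsilon> \<le> 1" using cardZ assms(2)
      by (meson mult_right_mono of_nat_le_iff order_trans less_imp_le)
    have BT: "(S - H) \<union> T \<in> feasible E C" by (rule feasible_sub[OF v SsF]) (use T_def SSs in blast)
    have dBT: "(S - H) \<inter> T = {}" using T_def by auto
    obtain T' where T': "T' \<subseteq> T" "T' \<inter> ((S - H) \<union> Z) = {}" "(S - H) \<union> Z \<union> T' \<in> feasible E C"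
      "card (T - T') \<le> 2 * card Z"
      using exch[OF v W BT dBT] by blast
    define X where "X = (S - H) \<union> Z \<union> T'"
    have fT: "finite T" using T_def fSs by auto
    have fT': "finite T'" using T'(1) fT finite_subset by auto
    have TE: "T \<subseteq> E" using T_def SsE by auto
    have Tsmall: "\<And>e. e \<in> T \<Longrightarrow> p e \<le> \<epsilon>^2 * Opt" using T_def S_def by auto
    have e2: "\<epsilon>^2 * Opt < \<epsilon> * Opt" using assms(2,3) Opos by (simp add: power2_eq_square)
    have TH: "T \<inter> H = {}" using Tsmall e2 H_def' by fastforce
    have SsST: "Ss = S \<union> T" "S \<inter> T = {}" using T_def SSs by auto
    have c1: "sum c X = sum c ((S - H) \<union> Z) + sum c T'" unfolding X_def
      using T'(2) fS fZ fT' by (subst sum.union_disjoint) auto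
    have c2: "sum c ((S - H) \<union> Z) \<le> sum c (S - H) + sum c Z"
    proof -
      have "sum c ((S - H) \<union> Z) = sum c (S - H) + sum c Z - sum c ((S - H) \<inter> Z)"
        using fS fZ by (subst sum_Un) auto
      moreover have "sum c ((S - H) \<inter> Z) \<ge> 0" using ZE nn by (intro sum_nonneg) auto
      ultimately show ?thesis by linarith
    qed
    have c3: "sum c T' \<le> sum c T" using sum_mono2[OF fT T'(1)] TE nn by auto
    have c4: "sum c (S - H) + sum c (S \<inter> H) = sum c S" using sum.Int_Diff[OF fS, of c H] by simp
    have c5: "sum c Ss = sum c S + sum c T" using SsST fS fT by (simp add: sum.union_disjoint)
    have cX: "sum c X \<le> \<beta>" using c1 c2 c3 c4 c5 cZ cSs by linarith
    have XF: "X \<in> feasible E C" using T'(3) X_def by simp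
    have XH: "X \<inter> H \<subseteq> R" using TH T'(1) ZR X_def by auto
    have p1: "sum p X = sum p ((S - H) \<union> Z) + sum p T'" unfolding X_def
      using T'(2) fS fZ fT' by (subst sum.union_disjoint) auto
    have p2: "sum p T = sum p T' + sum p (T - T')" using sum.subset_diff[OF T'(1) fT, of p] by simp
    have "sum p (T - T') \<le> real (card (T - T')) * (\<epsilon>^2 * Opt)"
      using sum_bounded_above[of "T - T'" p "\<epsilon>^2 * Opt"] Tsmall by auto
    also have "\<dots> \<le> real (2 * card Z) * (\<epsilon>^2 * Opt)"
      using T'(4) Opos by (intro mult_right_mono) auto
    also have "\<dots> = 2 * (real (card Z) * \<epsilon>) * (\<epsilon> * Opt)" by (simp add: power2_eq_square)
    also have "\<dots> \<le> 2 * 1 * (\<epsilon> * Opt)" using cZe assms(2) Opos by (intro mult_right_mono) auto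
    finally have p3: "sum p (T - T') \<le> 2 * \<epsilon> * Opt" by simp
    have p4: "sum p Ss = sum p S + sum p T" using SsST fS fT by (simp add: sum.union_disjoint)
    have p5: "\<epsilon> * sum p S \<le> \<epsilon> * Opt" using pS_le assms(2) by simp
    have pW': "sum p ((S - H) \<union> Z) \<ge> sum p S - \<epsilon> * sum p S" using pW by (simp add: algebra_simps)
    have eO: "\<epsilon> * Opt \<ge> 0" using Opos assms(2) by simp
    have p3': "sum p (T - T') \<le> 2 * (\<epsilon> * Opt)" using p3 by (simp add: algebra_simps)
    have "sum p X \<ge> Opt - 4 * (\<epsilon> * Opt)"
      using p1 p2 p3' p4 p5 pW' Ss(2) eO by linarith
    then have "sum p X \<ge> (1 - 4 * \<epsilon>) * Opt" by (simp add: algebra_simps)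
    then show ?thesis unfolding representative_set_def
      using RE XF cX XH unfolding is_solution_def H_def Opt_def by blast
  qed
qed

end
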